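(* Let $n\ge1$, let \[P^n=\Big\{x\in[0,4]^n:\sum_{i\in S}x_i+\sum_{i\notin S}(4-x_i)\ge\tfrac12\ \ \forall S\subseteq\{1,\dots,n\}\Big\},\] and let $\mathcal{B}=(B^{o}(4),\dots,B^{o}(4))$ ($n$ copies), where \[B^{o}(u)=\Big\{(x,z)\in\mathbb{R}\times[0,1]^u: x=uz_u+\sum_{j=1}^{u-1}z_j,\ 0\le z_{u-1}\le\dots\le z_1\le1,\ z_1+z_u\le1\Big\}.\] Let $P^n_{\mathcal{B}}=\{(x,z)\in\mathbb{R}^n\times\mathbb{R}^{4n}: x\in P^n,\ (x_i,z_i)\in B^o(4)\text{ for } i=1,\dots,n\}$, with all variables $x$ and $z$ integer. Then there exists a complete branch-and-bound tree with respect to $P^n_{\mathcal{B}}$ having $2^n+n$ leaf nodes.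
   Context: Branch-and-bound (B&B) trees: for a polyhedron $Q$ and its set of integer points $Q^{\mathrm{int}}$ (points of $Q$ whose integer-designated coordinates are integral), a B&B tree is a rooted binary tree whose nodes are labeled by polyhedra: the root is labeled by a box (polyhedron) containing $Q$, and each non-leaf node labeled $D'$ has exactly two children labeled $D'\cap\{y:y_i\le t\}$ and $D'\cap\{y:y_i\ge t+1\}$ for some integer-designated variable $y_i$ and some $t\in\mathbb{Z}$. The tree is complete with respect to $Q$ if $\mathrm{conv}(Q^{\mathrm{int}})=\mathrm{conv}\big(\bigcup_{N\text{ leaf}}(N\cap Q)\big)$. The size of the tree is its number of leaf nodes. *)

theory Defs
  imports "HOL-Analysis.Analysis" "HOL-Library.Numeral_Type"
begin

datatype 'i bbtree = Leaf | Branch 'i int "'i bbtree" "'i bbtree"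

fun bb_leaves :: "(real^'i) set \<Rightarrow> 'i bbtree \<Rightarrow> (real^'i) set list" where
  "bb_leaves D Leaf = [D]"
| "bb_leaves D (Branch i t l r) =
     bb_leaves (D \<inter> {y. y $ i \<le> of_int t}) l @ bb_leaves (D \<inter> {y. of_int t + 1 \<le> y $ i}) r"

definition bb_size :: "(real^'i) set \<Rightarrow> 'i bbtree \<Rightarrow> nat" where
  "bb_size D T = length (bb_leaves D T)"

definition int_points :: "(real^'i) set \<Rightarrow> (real^'i) set" where
  "int_points Q = {y \<in> Q. \<forall>k. y $ k \<in> \<int>}"

definition complete_bb_tree :: "(real^'i) set \<Rightarrow> (real^'i) set \<Rightarrow> 'i bbtree \<Rightarrow> bool" where
  "complete_bb_tree Q D T \<longleftrightarrow>
     (\<exists>l u. D = cbox l u) \<and> Q \<subseteq> D \<and>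
     convex hull (int_points Q) = convex hull (\<Union>N\<in>set (bb_leaves D T). N \<inter> Q)"

text \<open>P^n: indices 'n (n = CARD('n)).\<close>
definition Pn :: "(real^'n::finite) set" where
  "Pn = {x. (\<forall>i. 0 \<le> x $ i \<and> x $ i \<le> 4) \<and>
            (\<forall>S. (\<Sum>i\<in>S. x $ i) + (\<Sum>i\<in>-S. 4 - x $ i) \<ge> 1/2)}"

text \<open>B^o(4): z_1..z_4 are z 0, z 1, z 2, z 3.\<close>
definition Bo4 :: "real \<Rightarrow> (4 \<Rightarrow> real) \<Rightarrow> bool" where
  "Bo4 x z \<longleftrightarrow> (\<forall>j. 0 \<le> z j \<and> z j \<le> 1) \<and>
     x = 4 * z 3 + z 0 + z 1 + z 2 \<and>
     0 \<le> z 2 \<and> z 2 \<le> z 1 \<and> z 1 \<le> z 0 \<and> z 0 \<le> 1 \<and> z 0 + z 3 \<le> 1"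

text \<open>P^n_B: coordinates Inl i are x_i, coordinates Inr (i,j) are z_{i,j+1}.\<close>
definition PnB :: "(real^('n::finite + 'n \<times> 4)) set" where
  "PnB = {y. (\<chi> i. y $ Inl i) \<in> Pn \<and> (\<forall>i. Bo4 (y $ Inl i) (\<lambda>j. y $ Inr (i, j)))}"

end

theory Submission
  imports Defs
begin

lemma four_cases: "(j::4) = 0 \<or> j = 1 \<or> j = 2 \<or> j = 3"
proof (induct j)
  case (of_int z)
  then have "z = 0 \<or> z = 1 \<or> z = 2 \<or> z = 3" by auto
  then show ?case by auto
qed

definition wv :: "nat \<Rightarrow> 4 \<Rightarrow> real" where
 "wv k j = (if j = 3 then (if k = 4 then 1 else 0)
   else if j = 0 then (if 1 \<le> k \<and> k \<le> 3 then 1 else 0)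
   else if j = 1 then (if 2 \<le> k \<and> k \<le> 3 then 1 else 0)
   else (if k = 3 then 1 else 0))"

definition lam :: "real^('n::finite + 'n \<times> 4) \<Rightarrow> 'n \<Rightarrow> nat \<Rightarrow> real" where
 "lam y i k = (if k = 0 then 1 - y $ Inr (i,0) - y $ Inr (i,3)
   else if k = 1 then y $ Inr (i,0) - y $ Inr (i,1)
   else if k = 2 then y $ Inr (i,1) - y $ Inr (i,2)
   else if k = 3 then y $ Inr (i,2) else y $ Inr (i,3))"

definition upd :: "real^('n::finite + 'n \<times> 4) \<Rightarrow> 'n \<Rightarrow> nat \<Rightarrow> real^('n + 'n \<times> 4)" where
 "upd y i k = (\<chi> c. case c of Inl j \<Rightarrow> if j = i then real k else y $ c
    | Inr (j,l) \<Rightarrow> if j = i then wv k l else y $ c)"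

fun blk :: "'n + 'n \<times> 4 \<Rightarrow> 'n" where "blk (Inl i) = i" | "blk (Inr (i,j)) = i"

definition SJ :: "'n set \<Rightarrow> (real^('n::finite + 'n \<times> 4)) set" where
 "SJ J = {y \<in> PnB. (\<exists>kk. y $ Inr (kk,0) = 1) \<and> (\<forall>c. blk c \<notin> J \<longrightarrow> y $ c \<in> \<int>)}"

lemma Bo4_bounds: "Bo4 x z \<Longrightarrow> 0 \<le> x \<and> x \<le> 4"
  unfolding Bo4_def by auto

lemma Bo4_mid: "Bo4 x z \<Longrightarrow> z 0 = 1 \<Longrightarrow> 1 \<le> x \<and> x \<le> 3"
  unfolding Bo4_def by auto

lemma Pn_mid:
  fixes x :: "real^'n::finite"
  assumes "\<forall>i. 0 \<le> x$i \<and> x$i \<le> 4" "1 \<le> x$kk" "x$kk \<le> 3"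
  shows "x \<in> Pn"
  unfolding Pn_def
proof (intro CollectI conjI allI)
  fix i show "0 \<le> x$i" "x$i \<le> 4" using assms by auto
next
  fix S :: "'n set"
  have n1: "0 \<le> (\<Sum>i\<in>S. x $ i)" by (rule sum_nonneg) (use assms in auto)
  have n2: "0 \<le> (\<Sum>i\<in>-S. 4 - x $ i)" by (rule sum_nonneg) (use assms in auto)
  show "1/2 \<le> (\<Sum>i\<in>S. x $ i) + (\<Sum>i\<in>-S. 4 - x $ i)"
  proof (cases "kk \<in> S")
    case True
    have "x$kk \<le> (\<Sum>i\<in>S. x $ i)"
      by (rule member_le_sum) (use assms True in auto)
    then show ?thesis using n2 assms by linarith
  next
    case False
    have "4 - x$kk \<le> (\<Sum>i\<in>-S. 4 - x $ i)"
      by (rule member_le_sum) (use assms False in auto)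
    then show ?thesis using n1 assms by linarith
  qed
qed

lemma nat_le4: "(k::nat) \<le> 4 \<Longrightarrow> k = 0 \<or> k = 1 \<or> k = 2 \<or> k = 3 \<or> k = 4" by auto

lemma Bo4_wv: "k \<le> 4 \<Longrightarrow> Bo4 (real k) (wv k)"
  unfolding Bo4_def
  apply (intro conjI allI)
  using nat_le4[of k] four_cases
  by (auto simp: wv_def)

lemma PnB_Bo4: "y \<in> PnB \<Longrightarrow> Bo4 (y $ Inl i) (\<lambda>j. y $ Inr (i, j))"
  unfolding PnB_def by auto

lemma set04: "{0..4::nat} = {0,1,2,3,4}" by auto

lemma decomp:
  assumes "y \<in> PnB"
  shows "y = (\<Sum>k\<in>{0..4}. lam y i k *\<^sub>R upd y i k)"
proof -
  have B: "Bo4 (y $ Inl i) (\<lambda>j. y $ Inr (i, j))" using PnB_Bo4[OF assms] .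
  show ?thesis
  proof (subst vec_eq_iff, intro allI)
    fix c :: "'a + 'a \<times> 4"
    show "y $ c = (\<Sum>k\<in>{0..4}. lam y i k *\<^sub>R upd y i k) $ c"
    proof (cases c)
      case (Inl j)
      show ?thesis
      proof (cases "j = i")
        case True
        then show ?thesis using B Inl unfolding Bo4_def
          by (simp add: set04 upd_def lam_def algebra_simps)
      next
        case False
        then show ?thesis using Inl
          by (simp add: set04 upd_def lam_def algebra_simps)
      qed
    next
      case (Inr p)
      obtain j l where p: "p = (j,l)" by fastforce
      show ?thesis
      proof (cases "j = i")
        case True
        then show ?thesis using Inr p four_cases[of l]
          by (auto simp add: set04 upd_def lam_def wv_def algebra_simps)
      next
        case False
        then show ?thesis using Inr p
          by (simp add: set04 upd_def lam_def algebra_simps)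
      qed
    qed
  qed
qed

lemma lam_nonneg: "y \<in> PnB \<Longrightarrow> 0 \<le> lam y i k"
  using PnB_Bo4[of y i] unfolding Bo4_def lam_def by auto

lemma lam_sum: "(\<Sum>k\<in>{0..4}. lam y i k) = 1"
  by (simp add: set04 lam_def)

lemma lam_mid:
  assumes "y \<in> PnB" "y $ Inr (i,0) = 1" "k \<le> 4" "lam y i k \<noteq> 0"
  shows "1 \<le> k \<and> k \<le> 3"
proof -
  have "0 \<le> y $ Inr (i,3)" "y $ Inr (i,0) + y $ Inr (i,3) \<le> 1"
    using PnB_Bo4[OF assms(1), of i] unfolding Bo4_def by auto
  then have "y $ Inr (i,3) = 0" using assms(2) by linarith
  then show ?thesis using assms nat_le4[of k] by (auto simp: lam_def)
qed

lemma step: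
  assumes y: "y \<in> SJ (insert i J)" and k: "k \<le> 4" and nz: "lam y i k \<noteq> 0"
  shows "upd y i k \<in> SJ J"
proof -
  have yP: "y \<in> PnB" and int: "\<forall>c. blk c \<notin> insert i J \<longrightarrow> y $ c \<in> \<int>"
    using y unfolding SJ_def by auto
  obtain kk where kk: "y $ Inr (kk,0) = 1" using y unfolding SJ_def by auto
  have Bi: "\<And>j. Bo4 (y $ Inl j) (\<lambda>l. y $ Inr (j, l))" using PnB_Bo4[OF yP] .
  have ki: "kk = i \<Longrightarrow> 1 \<le> k \<and> k \<le> 3" using lam_mid[OF yP _ k nz] kk by auto
  have kk': "upd y i k $ Inr (kk,0) = 1"
    using kk ki by (auto simp: upd_def wv_def)
  have Bu: "\<And>j. Bo4 (upd y i k $ Inl j) (\<lambda>l. upd y i k $ Inr (j, l))"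
  proof -
    fix j show "Bo4 (upd y i k $ Inl j) (\<lambda>l. upd y i k $ Inr (j, l))"
    proof (cases "j = i")
      case True
      have "(\<lambda>l. upd y i k $ Inr (j, l)) = wv k" using True by (auto simp: upd_def)
      then show ?thesis using True Bo4_wv[OF k] by (simp add: upd_def)
    next
      case False
      then show ?thesis using Bi[of j] by (simp add: upd_def)
    qed
  qed
  have Pn: "(\<chi> j. upd y i k $ Inl j) \<in> Pn"
  proof (rule Pn_mid[where kk = kk])
    show "\<forall>j. 0 \<le> (\<chi> j. upd y i k $ Inl j) $ j \<and> (\<chi> j. upd y i k $ Inl j) $ j \<le> 4"
      using Bo4_bounds[OF Bu] by simp
    have "1 \<le> upd y i k $ Inl kk \<and> upd y i k $ Inl kk \<le> 3"
      using Bo4_mid[OF Bu, of kk] kk' by simp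
    then show "1 \<le> (\<chi> j. upd y i k $ Inl j) $ kk" "(\<chi> j. upd y i k $ Inl j) $ kk \<le> 3" by auto
  qed
  have ints: "\<forall>c. blk c \<notin> J \<longrightarrow> upd y i k $ c \<in> \<int>"
  proof (intro allI impI)
    fix c :: "'a + 'a \<times> 4" assume c: "blk c \<notin> J"
    show "upd y i k $ c \<in> \<int>"
    proof (cases "blk c = i")
      case True
      then show ?thesis by (cases c) (auto simp: upd_def wv_def)
    next
      case False
      then have "upd y i k $ c = y $ c" by (cases c) (auto simp: upd_def)
      then show ?thesis using int c False by auto
    qed
  qed
  show ?thesis unfolding SJ_def PnB_def using Pn Bu kk' ints by blast
qed

lemma SJ_hull:
  assumes "finite J"
  shows "SJ J \<subseteq> convex hull (int_points PnB)"
  using assms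
proof (induction J rule: finite_induct)
  case empty
  show ?case
  proof
    fix y assume "y \<in> SJ {}"
    then have "y \<in> int_points PnB" unfolding SJ_def int_points_def by auto
    then show "y \<in> convex hull (int_points PnB)" by (rule hull_inc)
  qed
next
  case (insert i J)
  show ?case
  proof
    fix y assume y: "y \<in> SJ (insert i J)"
    have yP: "y \<in> PnB" using y unfolding SJ_def by auto
    let ?K = "{k \<in> {0..4::nat}. lam y i k \<noteq> 0}"
    have e1: "(\<Sum>k\<in>?K. lam y i k *\<^sub>R upd y i k) = (\<Sum>k\<in>{0..4}. lam y i k *\<^sub>R upd y i k)"
      by (rule sum.mono_neutral_left) auto
    have e2: "(\<Sum>k\<in>?K. lam y i k) = 1"
    proof -
      have "(\<Sum>k\<in>?K. lam y i k) = (\<Sum>k\<in>{0..4}. lam y i k)"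
        by (rule sum.mono_neutral_left) auto
      then show ?thesis using lam_sum[of y i] by simp
    qed
    define t where "t = (\<Sum>k\<in>?K. lam y i k *\<^sub>R upd y i k)"
    have mem: "t \<in> convex hull (int_points PnB)"
      unfolding t_def
    proof (rule convex_sum)
      show "finite ?K" by auto
      show "convex (convex hull (int_points PnB))" by (rule convex_convex_hull)
      show "(\<Sum>k\<in>?K. lam y i k) = 1" by (rule e2)
      show "\<And>k. k \<in> ?K \<Longrightarrow> 0 \<le> lam y i k" using lam_nonneg[OF yP] by blast
      fix k assume k: "k \<in> ?K"
      then have "k \<le> 4" "lam y i k \<noteq> 0" by auto
      from step[OF y this] have "upd y i k \<in> SJ J" .
      then show "upd y i k \<in> convex hull (int_points PnB)" using insert.IH by blast
    qed
    have yeq: "y = t" unfolding t_def e1 by (rule decomp[OF yP])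
    show "y \<in> convex hull (int_points PnB)" using mem yeq by simp
  qed
qed

lemma mid_hull:
  assumes "y \<in> (PnB :: (real^('n::finite + 'n \<times> 4)) set)" "y $ Inr (kk,0) = 1"
  shows "y \<in> convex hull (int_points PnB)"
proof -
  have "y \<in> SJ (UNIV :: 'n set)" using assms unfolding SJ_def by auto
  then show ?thesis using SJ_hull[of "UNIV :: 'n set"] by auto
qed

lemma corner_int:
  assumes yP: "y \<in> PnB"
    and h: "\<forall>i. y $ Inr (i,0) \<le> 0 \<and> (y $ Inr (i,3) \<le> 0 \<or> 1 \<le> y $ Inr (i,3))"
  shows "y \<in> int_points PnB"
  unfolding int_points_def
proof (intro CollectI conjI allI yP)
  fix c :: "'a + 'a \<times> 4"
  have Z: "y $ Inr (i,0) = 0 \<and> y $ Inr (i,1) = 0 \<and> y $ Inr (i,2) = 0 \<and>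
     (y $ Inr (i,3) = 0 \<or> y $ Inr (i,3) = 1) \<and> y $ Inl i = 4 * y $ Inr (i,3)" for i
  proof -
    have a: "0 \<le> y $ Inr (i,2)" "y $ Inr (i,2) \<le> y $ Inr (i,1)" "y $ Inr (i,1) \<le> y $ Inr (i,0)"
      "0 \<le> y $ Inr (i,3)" "y $ Inr (i,3) \<le> 1"
      "y $ Inl i = 4 * y $ Inr (i,3) + y $ Inr (i,0) + y $ Inr (i,1) + y $ Inr (i,2)"
      using PnB_Bo4[OF yP, of i] unfolding Bo4_def by auto
    have b: "y $ Inr (i,0) \<le> 0" "y $ Inr (i,3) \<le> 0 \<or> 1 \<le> y $ Inr (i,3)" using h by auto
    show ?thesis using a b by linarith
  qed
  show "y $ c \<in> \<int>"
  proof (cases c)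
    case (Inl i)
    then show ?thesis using Z[of i] by auto
  next
    case (Inr p)
    obtain j l where p: "p = (j,l)" by fastforce
    then show ?thesis using Inr Z[of j] four_cases[of l] by auto
  qed
qed

fun full :: "'n list \<Rightarrow> ('n + 'n \<times> 4) bbtree" where
  "full [] = Leaf"
| "full (i#xs) = Branch (Inr (i,3)) 0 (full xs) (full xs)"

fun chain :: "'n list \<Rightarrow> 'n list \<Rightarrow> ('n + 'n \<times> 4) bbtree" where
  "chain ys [] = full ys"
| "chain ys (i#xs) = Branch (Inr (i,0)) 0 (chain ys xs) Leaf"

lemma length_full: "length (bb_leaves D (full xs)) = 2 ^ length xs"
  by (induction xs arbitrary: D) auto

lemma length_chain: "length (bb_leaves D (chain ys xs)) = length xs + 2 ^ length ys"
  by (induction xs arbitrary: D) (auto simp: length_full)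

lemma leaves_full:
  "N \<in> set (bb_leaves D (full xs)) \<Longrightarrow>
     N \<subseteq> D \<inter> {y. \<forall>i\<in>set xs. y $ Inr (i,3) \<le> 0 \<or> 1 \<le> y $ Inr (i,3)}"
proof (induction xs arbitrary: D)
  case Nil then show ?case by auto
next
  case (Cons a xs)
  from Cons.prems show ?case
    by (auto dest!: Cons.IH)
qed

lemma leaves_chain:
  "N \<in> set (bb_leaves D (chain ys xs)) \<Longrightarrow>
     N \<subseteq> D \<inter> ({y. \<exists>k. 1 \<le> y $ Inr (k,0)} \<union>
       {y. (\<forall>i\<in>set xs. y $ Inr (i,0) \<le> 0) \<and> (\<forall>i\<in>set ys. y $ Inr (i,3) \<le> 0 \<or> 1 \<le> y $ Inr (i,3))})"
proof (induction xs arbitrary: D)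
  case Nil then show ?case using leaves_full by fastforce
next
  case (Cons a xs)
  from Cons.prems show ?case
    by (auto dest!: Cons.IH)
qed

lemma cover:
  "y \<in> D \<Longrightarrow> \<forall>k. y $ k \<in> \<int> \<Longrightarrow> \<exists>N\<in>set (bb_leaves D T). y \<in> N"
proof (induction T arbitrary: D)
  case Leaf then show ?case by auto
next
  case (Branch i t l r)
  obtain m where m: "y $ i = of_int m" using Branch.prems(2) Ints_cases by metis
  show ?case
  proof (cases "m \<le> t")
    case True
    then have "y \<in> D \<inter> {y. y $ i \<le> of_int t}" using m Branch.prems by auto
    then show ?thesis using Branch.IH(1)[of "D \<inter> {y. y $ i \<le> of_int t}"] Branch.prems by auto
  next
    case False
    then have "y \<in> D \<inter> {y. of_int t + 1 \<le> y $ i}" using m Branch.prems by auto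
    then show ?thesis using Branch.IH(2)[of "D \<inter> {y. of_int t + 1 \<le> y $ i}"] Branch.prems by auto
  qed
qed

theorem proposition6:
  shows "\<exists>D (T :: ('n::finite + 'n \<times> 4) bbtree).
           complete_bb_tree (PnB :: (real^('n + 'n \<times> 4)) set) D T \<and>
           bb_size D T = 2 ^ CARD('n) + CARD('n)"
proof -
  obtain xs :: "'n list" where xs: "set xs = UNIV" "distinct xs"
    using finite_distinct_list[of "UNIV :: 'n set"] by auto
  define D :: "(real^('n + 'n \<times> 4)) set" where "D = cbox 0 (\<chi> _. 4)"
  define T where "T = chain xs xs"
  have sub: "(PnB :: (real^('n + 'n \<times> 4)) set) \<subseteq> D"
  proof
    fix y :: "real^('n + 'n \<times> 4)" assume yP: "y \<in> PnB"
    show "y \<in> D" unfolding D_def mem_box_cart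
    proof
      fix c :: "'n + 'n \<times> 4"
      show "0 $ c \<le> y $ c \<and> y $ c \<le> (\<chi> _. 4) $ c"
      proof (cases c)
        case (Inl i) then show ?thesis using Bo4_bounds[OF PnB_Bo4[OF yP, of i]] by simp
      next
        case (Inr p)
        obtain j l where p: "p = (j,l)" by fastforce
        have "0 \<le> y $ Inr (j,l) \<and> y $ Inr (j,l) \<le> 1"
          using PnB_Bo4[OF yP, of j] unfolding Bo4_def by auto
        then show ?thesis using Inr p by simp
      qed
    qed
  qed
  let ?U = "\<Union>N\<in>set (bb_leaves D T). N \<inter> PnB"
  have U1: "int_points PnB \<subseteq> ?U"
  proof
    fix y assume y: "y \<in> int_points (PnB :: (real^('n + 'n \<times> 4)) set)"
    then have "y \<in> PnB" "\<forall>k. y $ k \<in> \<int>" unfolding int_points_def by auto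
    moreover have "y \<in> D" using \<open>y \<in> PnB\<close> sub by blast
    ultimately obtain N where "N \<in> set (bb_leaves D T)" "y \<in> N" using cover[of y D T] by blast
    then show "y \<in> ?U" using \<open>y \<in> PnB\<close> by blast
  qed
  have U2: "?U \<subseteq> convex hull (int_points PnB)"
  proof
    fix y assume "y \<in> ?U"
    then obtain N where N: "N \<in> set (bb_leaves D T)" "y \<in> N" "y \<in> PnB" by auto
    have "y \<in> D \<inter> ({y. \<exists>k. 1 \<le> y $ Inr (k,0)} \<union>
       {y. (\<forall>i\<in>set xs. y $ Inr (i,0) \<le> 0) \<and> (\<forall>i\<in>set xs. y $ Inr (i,3) \<le> 0 \<or> 1 \<le> y $ Inr (i,3))})"
      using leaves_chain[OF N(1)[unfolded T_def]] N(2) by (rule subsetD)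
    then have "(\<exists>k. 1 \<le> y $ Inr (k,0)) \<or>
      (\<forall>i. y $ Inr (i,0) \<le> 0 \<and> (y $ Inr (i,3) \<le> 0 \<or> 1 \<le> y $ Inr (i,3)))"
      using xs(1) by auto
    then show "y \<in> convex hull (int_points PnB)"
    proof
      assume "\<exists>k. 1 \<le> y $ Inr (k,0)"
      then obtain k where "1 \<le> y $ Inr (k,0)" by auto
      moreover have "y $ Inr (k,0) \<le> 1" using PnB_Bo4[OF N(3), of k] unfolding Bo4_def by auto
      ultimately show ?thesis using mid_hull[OF N(3), of k] by auto
    next
      assume "\<forall>i. y $ Inr (i,0) \<le> 0 \<and> (y $ Inr (i,3) \<le> 0 \<or> 1 \<le> y $ Inr (i,3))"
      then have "y \<in> int_points PnB" by (rule corner_int[OF N(3)])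
      then show ?thesis by (rule hull_inc)
    qed
  qed
  have "convex hull (int_points PnB) = convex hull ?U"
  proof
    show "convex hull (int_points PnB) \<subseteq> convex hull ?U" by (rule hull_mono[OF U1])
    show "convex hull ?U \<subseteq> convex hull (int_points PnB)"
      using U2 convex_convex_hull[of "int_points PnB"] by (rule hull_minimal)
  qed
  then have "complete_bb_tree PnB D T"
    unfolding complete_bb_tree_def
  proof (intro conjI)
    show "\<exists>l u. D = cbox l u" unfolding D_def by blast
  qed (rule sub)
  moreover have "bb_size D T = 2 ^ CARD('n) + CARD('n)"
  proof -
    have "length xs = CARD('n)" using xs distinct_card by fastforce
    then show ?thesis unfolding bb_size_def T_def length_chain by simp
  qed
  ultimately show ?thesis by blast
qed

end
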